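(* Let $x \in \{0,1\}^{N}$ and $q \in Q$. Then demand $q$ is served under $x$ (i.e., there exists $r \in R_q$ such that $\sum_{j \in S} x_j \ge 1$ for all $S \in \mathcal{D}_{q,r}$) if and only if $\sum_{j \in S} x_j \ge 1$ for all $S \in \mathcal{C}_q$.
   Context: Let $N$ be a finite set (of nodes) and $Q$ a finite set (of demands). For each $q \in Q$ let $R_q$ be a finite nonempty set (of routes), and for each $r \in R_q$ let $\mathcal{D}_{q,r} \subseteq 2^{N}$ be a family of subsets of $N$. Route $r$ is called traversable under $x \in \{0,1\}^N$ if $\sum_{j\in S} x_j \ge 1$ for every $S \in \mathcal{D}_{q,r}$, and demand $q$ is served under $x$ if some $r \in R_q$ is traversable under $x$. Define the aggregated family $\mathcal{C}_q = \{ \bigcup_{r \in R_q} S_r : S_r \in \mathcal{D}_{q,r} \text{ for each } r \in R_q\}$, i.e. each member of $\mathcal{C}_q$ is the union of one chosen set $S_r\in\mathcal{D}_{q,r}$ for every $r\in R_q$. *)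

theory Defs
  imports Main
begin

definition traversable :: "('n \<Rightarrow> nat) \<Rightarrow> 'n set set \<Rightarrow> bool" where
  "traversable x Dqr \<longleftrightarrow> (\<forall>S\<in>Dqr. (\<Sum>j\<in>S. x j) \<ge> 1)"

definition served :: "('n \<Rightarrow> nat) \<Rightarrow> 'r set \<Rightarrow> ('r \<Rightarrow> 'n set set) \<Rightarrow> bool" where
  "served x Rq Dq \<longleftrightarrow> (\<exists>r\<in>Rq. traversable x (Dq r))"

definition aggregated :: "'r set \<Rightarrow> ('r \<Rightarrow> 'n set set) \<Rightarrow> 'n set set" where
  "aggregated Rq Dq = {(\<Union>r\<in>Rq. Sel r) | Sel. \<forall>r\<in>Rq. Sel r \<in> Dq r}"

end

theory Submission
  imports Defs
begin

lemma sum_ge1_iff: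
  fixes x :: "'n \<Rightarrow> nat"
  assumes "finite S"
  shows "(\<Sum>j\<in>S. x j) \<ge> 1 \<longleftrightarrow> (\<exists>j\<in>S. x j \<noteq> 0)"
  proof -
  have "(\<Sum>j\<in>S. x j) \<ge> 1 \<longleftrightarrow> (\<Sum>j\<in>S. x j) \<noteq> 0" by linarith
  also have "\<dots> \<longleftrightarrow> (\<exists>j\<in>S. x j \<noteq> 0)" using sum_eq_0_iff[OF assms, of x] by auto
  finally show ?thesis .
qed

theorem lemma1:
  fixes N :: "'n set" and Q :: "'q set"
    and R :: "'q \<Rightarrow> 'r set" and D :: "'q \<Rightarrow> 'r \<Rightarrow> 'n set set"
    and x :: "'n \<Rightarrow> nat" and q :: 'q
  assumes "finite N" and "finite Q"
    and "\<And>q. q \<in> Q \<Longrightarrow> finite (R q) \<and> R q \<noteq> {}"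
    and "\<And>q r. q \<in> Q \<Longrightarrow> r \<in> R q \<Longrightarrow> D q r \<subseteq> Pow N"
    and "\<forall>j\<in>N. x j \<in> {0, 1}"
    and "q \<in> Q"
  shows "served x (R q) (D q) \<longleftrightarrow> (\<forall>S\<in>aggregated (R q) (D q). (\<Sum>j\<in>S. x j) \<ge> 1)"
proof
  have finD: "finite S" if "r \<in> R q" "S \<in> D q r" for r S
    using assms(1) assms(4)[OF assms(6) that(1)] that(2) finite_subset by blast
  have finU: "finite (\<Union>r\<in>R q. Sel r)" if "\<forall>r\<in>R q. Sel r \<in> D q r" for Sel
    using assms(3)[OF assms(6)] that finD by blast
  {
    assume "served x (R q) (D q)"
    then obtain r where r: "r \<in> R q" and tr: "traversable x (D q r)"
      unfolding served_def by blast
    show "\<forall>S\<in>aggregated (R q) (D q). (\<Sum>j\<in>S. x j) \<ge> 1"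
    proof
      fix S assume "S \<in> aggregated (R q) (D q)"
      then obtain Sel where S: "S = (\<Union>r\<in>R q. Sel r)" and sel: "\<forall>r\<in>R q. Sel r \<in> D q r"
        unfolding aggregated_def by blast
      have "(\<Sum>j\<in>Sel r. x j) \<ge> 1" using tr sel r unfolding traversable_def by blast
      moreover have "finite (Sel r)" using finD r sel by blast
      ultimately obtain j where "j \<in> Sel r" "x j \<noteq> 0"
        using sum_ge1_iff by blast
      then have "\<exists>j\<in>S. x j \<noteq> 0" using S r by blast
      then show "(\<Sum>j\<in>S. x j) \<ge> 1"
        using sum_ge1_iff[OF finU[OF sel]] S by simp
    qed
  }
  {
    assume H: "\<forall>S\<in>aggregated (R q) (D q). (\<Sum>j\<in>S. x j) \<ge> 1"
    show "served x (R q) (D q)"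
    proof (rule ccontr)
      assume "\<not> served x (R q) (D q)"
      then have "\<forall>r\<in>R q. \<exists>S\<in>D q r. \<not> (\<Sum>j\<in>S. x j) \<ge> 1"
        unfolding served_def traversable_def by blast
      then obtain Sel where sel: "\<forall>r\<in>R q. Sel r \<in> D q r \<and> \<not> (\<Sum>j\<in>Sel r. x j) \<ge> 1"
        by metis
      have z: "\<forall>r\<in>R q. \<forall>j\<in>Sel r. x j = 0"
      proof (intro ballI)
        fix r j assume r: "r \<in> R q" and j: "j \<in> Sel r"
        have "\<not> (\<exists>j\<in>Sel r. x j \<noteq> 0)"
          using sel r sum_ge1_iff[OF finD[of r "Sel r"]] by blast
        then show "x j = 0" using j by blast
      qed
      have "(\<Union>r\<in>R q. Sel r) \<in> aggregated (R q) (D q)"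
        unfolding aggregated_def using sel by blast
      with H have "(\<Sum>j\<in>(\<Union>r\<in>R q. Sel r). x j) \<ge> 1" by blast
      moreover have "finite (\<Union>r\<in>R q. Sel r)" using finU sel by blast
      ultimately have "\<exists>j\<in>(\<Union>r\<in>R q. Sel r). x j \<noteq> 0" using sum_ge1_iff by blast
      then obtain r j where "r \<in> R q" "j \<in> Sel r" "x j \<noteq> 0" by blast
      then show False using z by simp
    qed
  }
qed

end
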